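(* Let $\varepsilon>0$ and $q\in(0,1)$, and fix a real number $\sigma$. Then there exist constants $C>0$ and $V_0>0$, depending only on $\varepsilon$, $q$ and $\sigma$, such that for every real $v$ with $|v|\ge V_0$ for which $s=\sigma+iv$ satisfies $\inf_{r\in\mathbb{Z}_{\ge -1}}|1-q^{r+s}|>\varepsilon$, we have $$|\zeta_q(s)|\le \begin{cases} C & (\sigma>1),\\ C\,|v| & (\sigma=1),\\ C\exp\left(-(\sigma-1)(1+\pi/2)\,|v|\right) & (\sigma<1).\end{cases}$$
   Context: For $q\in(0,1)$ and a positive integer $m$, the $q$-integer is $[m]_q=\frac{1-q^m}{1-q}$, and $q^{w}=e^{w\log q}$ for complex $w$. The two-variable $q$-zeta function is $\zeta_q(s,t)=\sum_{m=1}^\infty \frac{q^{mt}}{[m]_q^s}$, absolutely convergent for $s\in\mathbb{C}$, $\Re(t)>0$, and meromorphically continued to $\mathbb{C}^2$ (simple poles at $t\in\{a+2\pi i b/\log q: a,b\in\mathbb{Z}, a\le0\}$). The $q$-analogue of the Riemann zeta function is $\zeta_q(s)=\zeta_q(s,s-1)$ (via this continuation). *)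

theory Defs
  imports "HOL-Analysis.Analysis"
begin

definition qpow :: "real \<Rightarrow> complex \<Rightarrow> complex" where
  "qpow q w = exp (w * of_real (ln q))"

definition qint :: "real \<Rightarrow> nat \<Rightarrow> real" where
  "qint q m = (1 - q ^ m) / (1 - q)"

text \<open>The defining series sum_{m>=1} q^(m t) / [m]_q^s (with [m]_q^s = exp(s log [m]_q)),
  absolutely convergent for Re t > 0.\<close>
definition zeta_q2_series :: "real \<Rightarrow> complex \<Rightarrow> complex \<Rightarrow> complex" where
  "zeta_q2_series q s t =
     (\<Sum>m. qpow q (of_nat (Suc m) * t) / exp (s * of_real (ln (qint q (Suc m)))))"

definition zq_poles :: "real \<Rightarrow> complex set" where
  "zq_poles q = {of_int a + 2 * of_real pi * \<i> * of_int b / of_real (ln q) | a b :: int. a \<le> 0}"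

text \<open>Two-variable q-zeta function via its (unique) meromorphic continuation in t:
  for fixed s, the value at t is that of the holomorphic function on the complement of
  the pole set agreeing with the series on Re t > 0.\<close>
definition zeta_q2 :: "real \<Rightarrow> complex \<Rightarrow> complex \<Rightarrow> complex" where
  "zeta_q2 q s t = (THE z. \<exists>f. f holomorphic_on (- zq_poles q) \<and>
       (\<forall>t'. Re t' > 0 \<longrightarrow> f t' = zeta_q2_series q s t') \<and> f t = z)"

definition zeta_q :: "real \<Rightarrow> complex \<Rightarrow> complex" where
  "zeta_q q s = zeta_q2 q s (s - 1)"

end

theory Submission
  imports Defs "HOL-Complex_Analysis.Complex_Analysis"
begin


lemma poles_char:
  assumes q: "0 < q" "q < 1"
  shows "t \<in> zq_poles q \<longleftrightarrow> Re t \<in> \<int> \<and> Re t \<le> 0 \<and> Im t * ln q / (2*pi) \<in> \<int>"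
proof -
  have L: "ln q < 0" using q by simp
  have e: "Re (of_int a + 2 * of_real pi * \<i> * of_int b / of_real (ln q)) = of_int a"
          "Im (of_int a + 2 * of_real pi * \<i> * of_int b / of_real (ln q)) = 2 * pi * of_int b / ln q"
    for a b :: int
    by (simp_all add: Re_divide Im_divide power2_eq_square)
  show ?thesis
  proof
    assume "t \<in> zq_poles q"
    then obtain a b where t: "t = of_int a + 2 * of_real pi * \<i> * of_int b / of_real (ln q)" "a \<le> 0"
      unfolding zq_poles_def by blast
    show "Re t \<in> \<int> \<and> Re t \<le> 0 \<and> Im t * ln q / (2*pi) \<in> \<int>"
      using t L by (simp add: e)
  next
    assume h: "Re t \<in> \<int> \<and> Re t \<le> 0 \<and> Im t * ln q / (2*pi) \<in> \<int>"
    then obtain a b where ab: "Re t = of_int a" "Im t * ln q / (2*pi) = of_int b"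
      by (metis Ints_cases)
    have "a \<le> 0" using h ab by simp
    have "Im t = 2 * pi * of_int b / ln q" using ab(2) L
      by (simp add: field_simps)
    hence "t = of_int a + 2 * of_real pi * \<i> * of_int b / of_real (ln q)"
      using ab(1) by (simp add: complex_eq_iff e)
    thus "t \<in> zq_poles q" using \<open>a \<le> 0\<close> unfolding zq_poles_def by blast
  qed
qed

lemma poles_closed:
  assumes q: "0 < q" "q < 1"
  shows "closed (zq_poles q)"
proof -
  have "zq_poles q = (Re -` \<int>) \<inter> {t. Re t \<le> 0} \<inter> ((\<lambda>t. Im t * ln q / (2*pi)) -` \<int>)"
    using poles_char[OF q] by auto
  also have "closed \<dots>"
    by (intro closed_Int continuous_closed_vimage closed_Ints closed_Collect_le continuous_intros) (auto intro: isCont_Re isCont_Im)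
  finally show ?thesis .
qed

lemma poles_countable: "countable (zq_poles q)"
proof -
  have "zq_poles q \<subseteq> (\<lambda>(a,b). of_int a + 2 * of_real pi * \<i> * of_int b / of_real (ln q)) ` (UNIV :: (int\<times>int) set)"
    unfolding zq_poles_def by auto
  thus ?thesis by (rule countable_subset) simp
qed

lemma qpow_eq1_pole:
  assumes q: "0 < q" "q < 1" and "qpow q (t + of_int r) = 1" and "r \<ge> 0"
  shows "t \<in> zq_poles q"
proof -
  have L: "ln q < 0" using q by simp
  from assms(3) have "Re ((t + of_int r) * of_real (ln q)) = 0"
     "\<exists>n::int. Im ((t + of_int r) * of_real (ln q)) = of_int (2*n) * pi"
    unfolding qpow_def exp_eq_1 by auto
  then obtain n :: int where h: "(Re t + r) * ln q = 0" "Im t * ln q = of_int (2*n) * pi" by auto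
  have "Re t = - r" using h(1) L by simp
  moreover have "Im t * ln q / (2*pi) = of_int n" using h(2) by simp
  ultimately show ?thesis using poles_char[OF q(1,2)] \<open>r \<ge> 0\<close> by auto
qed



definition RN :: "complex \<Rightarrow> nat \<Rightarrow> real \<Rightarrow> complex" where
  "RN s N x = exp (- s * of_real (ln (1 - x))) - (\<Sum>i<N. pochhammer s i * of_real x ^ i / fact i)"

lemma RN_bound:
  assumes q: "0 < q" "q < 1" and x: "0 \<le> x" "x \<le> q"
  shows "cmod (RN s (Suc n) x) \<le> cmod (pochhammer s (Suc n)) * exp (\<bar>Re s + Suc n\<bar> * (- ln (1-q))) / fact n * x ^ Suc n"
proof -
  define f where "f = (\<lambda>i z. pochhammer s i * exp (-(s + of_nat i) * ln (1 - z)))"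
  define S where "S = closed_segment 0 (complex_of_real q)"
  define B where "B = cmod (pochhammer s (Suc n)) * exp (\<bar>Re s + Suc n\<bar> * (- ln (1-q)))"
  have Sreal: "z \<in> S \<Longrightarrow> \<exists>y. z = of_real y \<and> 0 \<le> y \<and> y \<le> q" for z
  proof -
    assume "z \<in> S"
    then obtain u where u: "z = u *\<^sub>R complex_of_real q" "0 \<le> u" "u \<le> 1"
      unfolding S_def closed_segment_def by auto
    show ?thesis using u q
      by (intro exI[of _ "u*q"]) (auto simp: scaleR_conv_of_real mult_le_cancel_right1)
  qed
  have "cmod (f 0 (of_real x) - (\<Sum>i\<le>n. f i 0 * (of_real x - 0) ^ i / fact i)) \<le> B * cmod (of_real x - 0) ^ Suc n / fact n"
  proof (rule complex_Taylor[where S=S])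
    show "convex S" unfolding S_def by simp
    show "0 \<in> S" unfolding S_def by simp
    show "complex_of_real x \<in> S" unfolding S_def using x q
      by (auto simp: closed_segment_def scaleR_conv_of_real intro!: exI[where x="x/q"])
  next
    fix i z assume z: "z \<in> S"
    then obtain y where y: "z = of_real y" "0 \<le> y" "y \<le> q" using Sreal by blast
    have w: "1 - z \<notin> \<real>\<^sub>\<le>\<^sub>0" using y q
      by (auto simp: complex_nonpos_Reals_iff)
    have nz: "1 - z \<noteq> 0" using y q by auto
    have "(f i has_field_derivative pochhammer s i * (exp (-(s + of_nat i) * ln (1 - z)) * (-(s + of_nat i) * (inverse (1 - z) * (-1))))) (at z)"
    proof -
      have d0: "((\<lambda>z. 1 - z) has_field_derivative -1) (at z)"
        by (auto intro!: derivative_eq_intros)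
      have d1: "((\<lambda>z. ln (1 - z)) has_field_derivative inverse (1 - z) * (-1)) (at z)"
        using DERIV_chain2[OF has_field_derivative_Ln[OF w] d0] by simp
      have d2: "((\<lambda>z. -(s + of_nat i) * ln (1 - z)) has_field_derivative (-(s + of_nat i)) * (inverse (1 - z) * (-1))) (at z)"
        using DERIV_cmult[OF d1] .
      show ?thesis unfolding f_def
        by (intro DERIV_cmult DERIV_chain2[of exp "exp (-(s + of_nat i) * ln (1 - z))" "\<lambda>z. -(s + of_nat i) * ln (1 - z)" z, OF DERIV_exp d2])
    qed
    also have "pochhammer s i * (exp (-(s + of_nat i) * ln (1 - z)) * (-(s + of_nat i) * (inverse (1 - z) * (-1)))) = f (Suc i) z"
    proof -
      have "exp (-(s + of_nat (Suc i)) * ln (1 - z)) = exp (-(s + of_nat i) * ln (1 - z)) * exp (- ln (1 - z))"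
        by (simp add: exp_add[symmetric] algebra_simps)
      also have "exp (- ln (1 - z)) = inverse (1 - z)" using nz by (simp add: exp_minus)
      finally show ?thesis unfolding f_def by (simp add: pochhammer_Suc algebra_simps)
    qed
    finally show "(f i has_field_derivative f (Suc i) z) (at z within S)"
      by (rule has_field_derivative_at_within)
  next
    fix z assume z: "z \<in> S"
    then obtain y where y: "z = of_real y" "0 \<le> y" "y \<le> q" using Sreal by blast
    have l: "ln (1 - z) = of_real (ln (1 - y))" using y q by (simp add: Ln_of_real[symmetric])
    have l1: "ln (1 - q) \<le> ln (1 - y)" "ln (1 - y) \<le> 0" using y q by auto
    have "- (Re s + Suc n) * ln (1 - y) \<le> \<bar>Re s + Suc n\<bar> * (- ln (1-q))"
    proof -
      have "- (Re s + Suc n) * ln (1 - y) \<le> \<bar>Re s + Suc n\<bar> * \<bar>ln (1 - y)\<bar>"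
        by (metis abs_ge_self abs_minus_cancel abs_mult minus_mult_left)
      also have "\<dots> \<le> \<bar>Re s + Suc n\<bar> * (- ln (1-q))"
        using l1 by (intro mult_left_mono) auto
      finally show ?thesis .
    qed
    thus "cmod (f (Suc n) z) \<le> B"
      unfolding f_def B_def l by (auto simp: norm_mult intro!: mult_left_mono)
  qed
  moreover have "f 0 (of_real x) = exp (- s * of_real (ln (1 - x)))"
    using x q by (simp add: f_def Ln_of_real[symmetric])
  moreover have "f i 0 = pochhammer s i" for i by (simp add: f_def)
  ultimately have "cmod (RN s (Suc n) x) \<le> B * x ^ Suc n / fact n"
    unfolding RN_def using x by (simp add: lessThan_Suc_atMost norm_power)
  thus ?thesis by (simp add: B_def)
qed



definition gterm :: "real \<Rightarrow> complex \<Rightarrow> nat \<Rightarrow> nat \<Rightarrow> complex \<Rightarrow> complex" where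
  "gterm q s N m t = qpow q (of_nat (Suc m) * t) * RN s N (q ^ Suc m)"

definition GG :: "real \<Rightarrow> complex \<Rightarrow> nat \<Rightarrow> complex \<Rightarrow> complex" where
  "GG q s N t = exp (s * of_real (ln (1-q))) *
     ((\<Sum>k<N. pochhammer s k / fact k * (qpow q (t + of_nat k) / (1 - qpow q (t + of_nat k))))
      + (\<Sum>m. gterm q s N m t))"

lemma norm_qpow: "cmod (qpow q w) = exp (Re w * ln q)"
  unfolding qpow_def by (simp add: norm_exp_eq_Re)

lemma qpow_pow: "qpow q w ^ n = qpow q (of_nat n * w)"
  unfolding qpow_def by (simp add: exp_of_nat_mult[symmetric] mult.assoc)

lemma gterm_bound:
  assumes q: "0 < q" "q < 1" and a: "a \<le> Re t"
  shows "cmod (gterm q s (Suc n) m t) \<le>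
    (cmod (pochhammer s (Suc n)) * exp (\<bar>Re s + Suc n\<bar> * (- ln (1-q))) / fact n) * (exp (a * ln q) * q ^ Suc n) ^ Suc m"
proof -
  define Bc where "Bc = cmod (pochhammer s (Suc n)) * exp (\<bar>Re s + Suc n\<bar> * (- ln (1-q))) / fact n"
  have x: "0 \<le> q ^ Suc m" "q ^ Suc m \<le> q" using q by (auto intro: power_le_imp_le_base simp: power_le_one)
  have L: "ln q < 0" using q by simp
  have "cmod (qpow q (of_nat (Suc m) * t)) = exp (Re t * ln q) ^ Suc m"
    by (subst exp_of_nat_mult[symmetric]) (simp add: norm_qpow mult_ac)
  also have "\<dots> \<le> exp (a * ln q) ^ Suc m"
    using a L by (intro power_mono) (auto intro: mult_right_mono_neg)
  finally have 1: "cmod (qpow q (of_nat (Suc m) * t)) \<le> exp (a * ln q) ^ Suc m" .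
  have 2: "cmod (RN s (Suc n) (q ^ Suc m)) \<le> Bc * (q ^ Suc m) ^ Suc n"
    using RN_bound[OF q x] unfolding Bc_def by simp
  have "cmod (gterm q s (Suc n) m t) \<le> exp (a * ln q) ^ Suc m * (Bc * (q ^ Suc m) ^ Suc n)"
    unfolding gterm_def norm_mult by (intro mult_mono 1 2) auto
  also have "\<dots> = Bc * (exp (a * ln q) * q ^ Suc n) ^ Suc m"
    by (simp add: power_mult_distrib power_mult[symmetric] mult.commute)
  finally show ?thesis unfolding Bc_def .
qed

lemma geo_lt1:
  assumes q: "0 < q" "q < 1" and a: "a + real N > 0"
  shows "exp (a * ln q) * q ^ N < 1" "0 \<le> exp (a * ln q) * q ^ N"
proof -
  have "q ^ N = exp (real N * ln q)" using q by (simp add: exp_of_nat_mult)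
  hence "exp (a * ln q) * q ^ N = exp ((a + real N) * ln q)" by (simp add: exp_add[symmetric] algebra_simps)
  moreover have "(a + real N) * ln q < 0" using a q by (simp add: mult_pos_neg)
  ultimately show "exp (a * ln q) * q ^ N < 1" by simp
  show "0 \<le> exp (a * ln q) * q ^ N" using q by simp
qed

lemma gterm_summable_bound:
  assumes q: "0 < q" "q < 1" and a: "a + real (Suc n) > 0"
  shows "summable (\<lambda>m. (cmod (pochhammer s (Suc n)) * exp (\<bar>Re s + Suc n\<bar> * (- ln (1-q))) / fact n) * (exp (a * ln q) * q ^ Suc n) ^ Suc m)"
proof -
  have "summable (\<lambda>m. (exp (a * ln q) * q ^ Suc n) ^ m)"
    using geo_lt1[OF q a] by (intro summable_geometric) simp
  hence "summable (\<lambda>m. (exp (a * ln q) * q ^ Suc n) ^ Suc m)"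
    by (subst summable_Suc_iff)
  thus ?thesis by (rule summable_mult)
qed

lemma gterm_summable:
  assumes q: "0 < q" "q < 1" and t: "Re t + real (Suc n) > 0"
  shows "summable (\<lambda>m. gterm q s (Suc n) m t)"
  by (rule summable_norm_cancel, rule summable_comparison_test'[OF gterm_summable_bound[OF q t]])
     (use gterm_bound[OF q, of "Re t"] in auto)

lemma gsum_holo:
  assumes q: "0 < q" "q < 1"
  shows "(\<lambda>t. \<Sum>m. gterm q s (Suc n) m t) holomorphic_on {t. Re t > - real (Suc n)}"
proof (rule holomorphic_uniform_sequence[where f="\<lambda>k t. \<Sum>m<k. gterm q s (Suc n) m t"])
  show "open {t. Re t > - real (Suc n)}" by (simp add: open_halfspace_Re_gt)
  show "(\<lambda>t. \<Sum>m<k. gterm q s (Suc n) m t) holomorphic_on {t. Re t > - real (Suc n)}" for k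
    unfolding gterm_def qpow_def by (intro holomorphic_intros)
next
  fix x assume x: "x \<in> {t. Re t > - real (Suc n)}"
  define d where "d = (Re x + Suc n) / 2"
  have d: "d > 0" using x by (simp add: d_def)
  have sub: "cball x d \<subseteq> {t. Re t > - real (Suc n)}"
  proof
    fix t assume "t \<in> cball x d"
    hence "cmod (x - t) \<le> d" by (simp add: dist_norm)
    hence "\<bar>Re x - Re t\<bar> \<le> d" using abs_Re_le_cmod[of "x - t"] by simp
    hence "Re x - d \<le> Re t" by linarith
    moreover have "Re x - d > - real (Suc n)" using x by (simp add: d_def field_simps)
    ultimately show "t \<in> {t. Re t > - real (Suc n)}" by simp
  qed
  have a: "(Re x - d) + real (Suc n) > 0" using x by (simp add: d_def field_simps)
  have "uniform_limit (cball x d) (\<lambda>k t. \<Sum>m<k. gterm q s (Suc n) m t) (\<lambda>t. \<Sum>m. gterm q s (Suc n) m t) sequentially"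
  proof (rule Weierstrass_m_test[OF _ gterm_summable_bound[OF q a]])
    fix m t assume "t \<in> cball x d"
    hence "cmod (x - t) \<le> d" by (simp add: dist_norm)
    hence "\<bar>Re x - Re t\<bar> \<le> d" using abs_Re_le_cmod[of "x - t"] by simp
    hence "Re x - d \<le> Re t" by simp
    thus "norm (gterm q s (Suc n) m t) \<le> (cmod (pochhammer s (Suc n)) * exp (\<bar>Re s + Suc n\<bar> * (- ln (1-q))) / fact n) * (exp ((Re x - d) * ln q) * q ^ Suc n) ^ Suc m"
      by (rule gterm_bound[OF q])
  qed
  thus "\<exists>d>0. cball x d \<subseteq> {t. Re t > - real (Suc n)} \<and> uniform_limit (cball x d) (\<lambda>k t. \<Sum>m<k. gterm q s (Suc n) m t) (\<lambda>t. \<Sum>m. gterm q s (Suc n) m t) sequentially"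
    using d sub by blast
qed

lemma GG_holo:
  assumes q: "0 < q" "q < 1"
  shows "GG q s (Suc n) holomorphic_on ({t. Re t > - real (Suc n)} - zq_poles q)"
proof -
  have ne: "1 - qpow q (t + of_nat k) \<noteq> 0" if "t \<notin> zq_poles q" for t k
    using qpow_eq1_pole[OF q, of t "int k"] that by auto
  have h1: "(\<lambda>t. \<Sum>k<Suc n. pochhammer s k / fact k * (qpow q (t + of_nat k) / (1 - qpow q (t + of_nat k))))
        holomorphic_on ({t. Re t > - real (Suc n)} - zq_poles q)"
    unfolding qpow_def using ne unfolding qpow_def by (intro holomorphic_intros) auto
  have h2: "(\<lambda>t. \<Sum>m. gterm q s (Suc n) m t) holomorphic_on ({t. Re t > - real (Suc n)} - zq_poles q)"
    by (rule holomorphic_on_subset[OF gsum_holo[OF q]]) auto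
  show ?thesis unfolding GG_def[abs_def]
    by (rule holomorphic_on_mult[OF holomorphic_on_const holomorphic_on_add[OF h1 h2]])
qed



lemma term_eq:
  assumes q: "0 < q" "q < 1"
  shows "qpow q (of_nat (Suc m) * t) / exp (s * of_real (ln (qint q (Suc m)))) =
    exp (s * of_real (ln (1-q))) * ((\<Sum>k<N. pochhammer s k / fact k * qpow q (t + of_nat k) ^ Suc m) + gterm q s N m t)"
proof -
  define x where "x = q ^ Suc m"
  have "q ^ Suc m < 1" using q by (intro power_Suc_less_one) auto
  hence x: "0 < x" "x < 1" using q unfolding x_def by auto
  have "ln (qint q (Suc m)) = ln (1 - x) - ln (1 - q)"
    unfolding qint_def x_def[symmetric] using x q by (simp add: ln_div)
  hence lq: "complex_of_real (ln (qint q (Suc m))) = of_real (ln (1 - x)) - of_real (ln (1 - q))"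
    by simp
  have e: "-(s * of_real (ln (qint q (Suc m)))) = s * of_real (ln (1-q)) + (- s * of_real (ln (1 - x)))"
    by (subst lq) (simp add: algebra_simps)
  have "1 / exp (s * of_real (ln (qint q (Suc m)))) = exp (-(s * of_real (ln (qint q (Suc m)))))"
    by (simp add: exp_minus divide_inverse)
  also have "\<dots> = exp (s * of_real (ln (1-q))) * exp (- s * of_real (ln (1 - x)))"
    unfolding e exp_add ..
  finally have 1: "1 / exp (s * of_real (ln (qint q (Suc m)))) = exp (s * of_real (ln (1-q))) * exp (- s * of_real (ln (1 - x)))" .
  have 2: "exp (- s * of_real (ln (1 - x))) = RN s N x + (\<Sum>k<N. pochhammer s k * of_real x ^ k / fact k)"
    unfolding RN_def by simp
  have 3: "qpow q (t + of_nat k) ^ Suc m = qpow q (of_nat (Suc m) * t) * of_real x ^ k" for k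
  proof -
    have qe: "complex_of_real q = exp (of_real (ln q))" using q by (simp add: exp_of_real)
    have "(of_real x :: complex) = exp (of_real (ln q)) ^ Suc m" unfolding x_def of_real_power qe ..
    hence "of_real x = exp (of_nat (Suc m) * of_real (ln q) :: complex)"
      by (simp only: exp_of_nat_mult)
    hence "of_real x ^ k = exp (of_nat k * (of_nat (Suc m) * of_real (ln q)) :: complex)"
      by (simp add: exp_of_nat_mult)
    thus ?thesis unfolding qpow_pow unfolding qpow_def
      by (simp add: exp_add[symmetric] algebra_simps)
  qed
  have "qpow q (of_nat (Suc m) * t) / exp (s * of_real (ln (qint q (Suc m))))
      = qpow q (of_nat (Suc m) * t) * (1 / exp (s * of_real (ln (qint q (Suc m)))))" by simp
  also have "\<dots> = qpow q (of_nat (Suc m) * t) * (exp (s * of_real (ln (1-q))) * (RN s N x + (\<Sum>k<N. pochhammer s k * of_real x ^ k / fact k)))"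
    by (simp only: 1 2)
  also have "\<dots> = exp (s * of_real (ln (1-q))) * ((\<Sum>k<N. pochhammer s k / fact k * (qpow q (of_nat (Suc m) * t) * of_real x ^ k)) + qpow q (of_nat (Suc m) * t) * RN s N x)"
    by (simp add: algebra_simps sum_distrib_left sum_distrib_right)
  finally show ?thesis
    unfolding gterm_def x_def[symmetric] 3 .
qed

lemma series_sums_GG:
  assumes q: "0 < q" "q < 1" and t: "Re t > 0"
  shows "(\<lambda>m. qpow q (of_nat (Suc m) * t) / exp (s * of_real (ln (qint q (Suc m))))) sums GG q s (Suc n) t"
proof -
  have geo: "(\<lambda>m. qpow q (t + of_nat k) ^ Suc m) sums (qpow q (t + of_nat k) / (1 - qpow q (t + of_nat k)))" for k
  proof -
    have "Re (t + of_nat k) * ln q < 0" using t q by (simp add: mult_pos_neg add_pos_nonneg)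
    hence "norm (qpow q (t + of_nat k)) < 1" by (simp add: norm_qpow)
    from sums_mult[OF geometric_sums[OF this], of "qpow q (t + of_nat k)"]
    show ?thesis by (simp add: divide_inverse)
  qed
  have gs: "(\<lambda>m. gterm q s (Suc n) m t) sums (\<Sum>m. gterm q s (Suc n) m t)"
    using gterm_summable[OF q, of t n] t by (intro summable_sums) auto
  have "(\<lambda>m. exp (s * of_real (ln (1-q))) * ((\<Sum>k<Suc n. pochhammer s k / fact k * qpow q (t + of_nat k) ^ Suc m) + gterm q s (Suc n) m t)) sums GG q s (Suc n) t"
    unfolding GG_def
    by (intro sums_mult sums_add gs sums_sum geo)
  thus ?thesis by (subst term_eq[OF q, abs_def])
qed

lemma series_eq_GG:
  assumes q: "0 < q" "q < 1" and t: "Re t > 0"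
  shows "zeta_q2_series q s t = GG q s (Suc n) t"
  unfolding zeta_q2_series_def using series_sums_GG[OF q t] by (simp add: sums_iff)



definition FF :: "real \<Rightarrow> complex \<Rightarrow> complex \<Rightarrow> complex" where
  "FF q s t = GG q s (Suc (nat \<lfloor>- Re t\<rfloor>)) t"

lemma Re_pos_not_pole:
  assumes q: "0 < q" "q < 1" and "Re t > 0" shows "t \<notin> zq_poles q"
  using poles_char[OF q, of t] assms by auto

lemma open_Omega:
  assumes q: "0 < q" "q < 1"
  shows "open ({t. Re t > - real (Suc n)} - zq_poles q)"
  by (intro open_Diff poles_closed[OF q]) (simp add: open_halfspace_Re_gt)

lemma GG_agree:
  assumes q: "0 < q" "q < 1" and nm: "n \<le> m" and t: "t \<in> {t. Re t > - real (Suc n)} - zq_poles q"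
  shows "GG q s (Suc n) t = GG q s (Suc m) t"
proof (rule analytic_continuation_open[where s="{t. Re t > 0}" and s'="{t. Re t > - real (Suc n)} - zq_poles q" and f="GG q s (Suc n)" and g="GG q s (Suc m)" and z=t])
  show "open {t. Re t > 0}" by (simp add: open_halfspace_Re_gt)
  show "open ({t. Re t > - real (Suc n)} - zq_poles q)" by (rule open_Omega[OF q])
  show "{t. Re t > 0} \<noteq> {}" by (auto intro!: exI[of _ 1])
  have "connected ({t. Re t > - real (Suc n)} - zq_poles q)"
    by (intro connected_open_diff_countable poles_countable convex_connected convex_halfspace_Re_gt)
       (auto simp: open_halfspace_Re_gt)
  thus "connected ({t. Re t > - real (Suc n)} - zq_poles q)" .
  show "{t. Re t > 0} \<subseteq> {t. Re t > - real (Suc n)} - zq_poles q"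
    using Re_pos_not_pole[OF q] by auto
  show "GG q s (Suc n) holomorphic_on ({t. Re t > - real (Suc n)} - zq_poles q)"
    by (rule GG_holo[OF q])
  show "GG q s (Suc m) holomorphic_on ({t. Re t > - real (Suc n)} - zq_poles q)"
    by (rule holomorphic_on_subset[OF GG_holo[OF q]]) (use nm in auto)
  show "GG q s (Suc n) z = GG q s (Suc m) z" if "z \<in> {t. Re t > 0}" for z
    using series_eq_GG[OF q, of z s n] series_eq_GG[OF q, of z s m] that by simp
qed (use t in auto)

lemma GG_agree':
  assumes q: "0 < q" "q < 1" and t: "t \<in> {t. Re t > - real (Suc n)} - zq_poles q"
    and t': "t \<in> {t. Re t > - real (Suc m)} - zq_poles q"
  shows "GG q s (Suc n) t = GG q s (Suc m) t"
proof (cases "n \<le> m")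
  case True thus ?thesis using GG_agree[OF q True t] by simp
next
  case False thus ?thesis using GG_agree[OF q _ t', of n] by simp
qed

lemma in_Omega_nn:
  assumes "t \<notin> zq_poles q"
  shows "t \<in> {u. Re u > - real (Suc (nat \<lfloor>- Re t\<rfloor>))} - zq_poles q"
proof -
  have "- Re t < of_int \<lfloor>- Re t\<rfloor> + 1" by linarith
  also have "\<dots> \<le> real (Suc (nat \<lfloor>- Re t\<rfloor>))" by linarith
  finally show ?thesis using assms by auto
qed

lemma FF_eq:
  assumes q: "0 < q" "q < 1" and t: "t \<in> {t. Re t > - real (Suc n)} - zq_poles q"
  shows "FF q s t = GG q s (Suc n) t"
proof -
  have "t \<notin> zq_poles q" using t by auto
  thus ?thesis unfolding FF_def using GG_agree'[OF q in_Omega_nn[OF \<open>t \<notin> zq_poles q\<close>] t] by auto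
qed

lemma FF_holo:
  assumes q: "0 < q" "q < 1"
  shows "FF q s holomorphic_on (- zq_poles q)"
proof -
  have op: "open (- zq_poles q)" using poles_closed[OF q] by (simp add: open_Compl)
  show ?thesis unfolding holomorphic_on_open[OF op]
  proof
    fix x assume x: "x \<in> - zq_poles q"
    define n where "n = nat \<lfloor>- Re x\<rfloor>"
    define Om where "Om = {t. Re t > - real (Suc n)} - zq_poles q"
    have xO: "x \<in> Om" unfolding Om_def n_def using in_Omega_nn x by auto
    have "GG q s (Suc n) holomorphic_on Om" unfolding Om_def by (rule GG_holo[OF q])
    then obtain f' where "(GG q s (Suc n) has_field_derivative f') (at x)"
      using holomorphic_on_open[OF open_Omega[OF q]] xO unfolding Om_def by blast
    hence "(FF q s has_field_derivative f') (at x)"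
      by (rule has_field_derivative_transform_within_open[OF _ open_Omega[OF q] xO[unfolded Om_def]])
         (use FF_eq[OF q] in auto)
    thus "\<exists>f'. (FF q s has_field_derivative f') (at x)" by blast
  qed
qed

lemma FF_series:
  assumes q: "0 < q" "q < 1" and t: "Re t > 0"
  shows "FF q s t = zeta_q2_series q s t"
  unfolding FF_def using series_eq_GG[OF q t] by simp

lemma zeta_q2_eq:
  assumes q: "0 < q" "q < 1" and t: "t \<notin> zq_poles q"
  shows "zeta_q2 q s t = FF q s t"
  unfolding zeta_q2_def
proof (rule the_equality)
  show "\<exists>f. f holomorphic_on - zq_poles q \<and> (\<forall>t'. 0 < Re t' \<longrightarrow> f t' = zeta_q2_series q s t') \<and> f t = FF q s t"
    using FF_holo[OF q] FF_series[OF q] by blast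
next
  fix z assume "\<exists>f. f holomorphic_on - zq_poles q \<and> (\<forall>t'. 0 < Re t' \<longrightarrow> f t' = zeta_q2_series q s t') \<and> f t = z"
  then obtain f where f: "f holomorphic_on - zq_poles q" "\<And>t'. 0 < Re t' \<Longrightarrow> f t' = zeta_q2_series q s t'" "f t = z"
    by blast
  have "f t = FF q s t"
  proof (rule analytic_continuation_open[where s="{t. Re t > 0}" and s'="- zq_poles q" and f=f and g="FF q s" and z=t])
    show "open {t. Re t > 0}" by (simp add: open_halfspace_Re_gt)
    show "open (- zq_poles q)" using poles_closed[OF q] by (simp add: open_Compl)
    show "{t. Re t > 0} \<noteq> {}" by (auto intro!: exI[of _ 1])
    have "connected (UNIV - zq_poles q)"
      by (intro connected_open_diff_countable poles_countable) auto
    thus "connected (- zq_poles q)" by (simp add: Compl_eq_Diff_UNIV)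
    show "{t. Re t > 0} \<subseteq> - zq_poles q" using Re_pos_not_pole[OF q] by auto
    show "f holomorphic_on - zq_poles q" by (rule f(1))
    show "FF q s holomorphic_on - zq_poles q" by (rule FF_holo[OF q])
    show "f z = FF q s z" if "z \<in> {t. Re t > 0}" for z
      using f(2) FF_series[OF q] that by simp
  qed (use t in auto)
  thus "z = FF q s t" using f(3) by simp
qed



lemma norm_poch_le:
  fixes s :: complex
  shows "cmod (pochhammer s k) \<le> (cmod s + k) ^ k"
proof -
  have "cmod (pochhammer s k) = (\<Prod>i<k. cmod (s + of_nat i))"
    by (simp add: pochhammer_prod prod_norm atLeast0LessThan)
  also have "\<dots> \<le> (\<Prod>i<k. cmod s + k)"
    by (intro prod_mono) (auto intro: order_trans[OF norm_triangle_ineq])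
  finally show ?thesis by simp
qed

lemma poch_le_X:
  fixes s :: complex
  assumes "k \<le> N" "cmod s \<le> Y" 
  shows "cmod (pochhammer s k) \<le> (Y + N) ^ N"
proof -
  have Y: "Y \<ge> 0" using assms(2) norm_ge_zero order_trans by blast
  have "cmod (pochhammer s k) \<le> (cmod s + k) ^ k" by (rule norm_poch_le)
  also have "\<dots> \<le> (Y + N) ^ k" using assms by (intro power_mono) auto
  also have "\<dots> \<le> (Y + N) ^ N"
  proof (cases "N = 0")
    case True thus ?thesis using assms by simp
  next
    case False hence "1 \<le> Y + N" using Y by simp
    thus ?thesis using assms by (intro power_increasing) auto
  qed
  finally show ?thesis .
qed

lemma INF_le:
  assumes "r \<ge> -1"
  shows "(INF r\<in>{-1::int..}. cmod (1 - qpow q (of_int r + s))) \<le> cmod (1 - qpow q (of_int r + s))"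
  by (rule cINF_lower) (auto intro: bdd_belowI2[where m=0] simp: assms)

lemma not_pole_of_INF:
  assumes q: "0 < q" "q < 1" and e: "(INF r\<in>{-1::int..}. cmod (1 - qpow q (of_int r + s))) > 0"
  shows "s - 1 \<notin> zq_poles q"
proof
  assume "s - 1 \<in> zq_poles q"
  hence h: "Re (s - 1) \<in> \<int>" "Re (s - 1) \<le> 0" "Im (s - 1) * ln q / (2*pi) \<in> \<int>"
    using poles_char[OF q] by auto
  obtain a where a: "Re (s - 1) = of_int a" using h(1) Ints_cases by blast
  obtain b where b: "Im (s - 1) * ln q / (2*pi) = of_int b" using h(3) Ints_cases by blast
  define r where "r = - a - 1"
  have r: "r \<ge> -1" using a h(2) by (simp add: r_def)
  have "qpow q (of_int r + s) = 1"
    unfolding qpow_def exp_eq_1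
  proof
    show "Re ((of_int r + s) * complex_of_real (ln q)) = 0" using a by (simp add: r_def)
    have "Im (s) * ln q = 2 * pi * of_int b" using b by (simp add: field_simps)
    thus "\<exists>n. Im ((of_int r + s) * complex_of_real (ln q)) = real_of_int (2 * n) * pi"
      by (intro exI[of _ b]) simp
  qed
  hence "cmod (1 - qpow q (of_int r + s)) = 0" by simp
  with INF_le[OF r, of q s] e show False by simp
qed

lemma poly_bound:
  fixes \<epsilon> q \<sigma> :: real
  assumes e: "\<epsilon> > 0" and q: "0 < q" "q < 1"
  defines "N \<equiv> Suc (nat \<lfloor>1 - \<sigma>\<rfloor>)"
  shows "\<exists>K\<ge>0. \<forall>v. (INF r\<in>{-1::int..}. cmod (1 - qpow q (of_int r + Complex \<sigma> v))) > \<epsilon> \<longrightarrow>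
           cmod (zeta_q q (Complex \<sigma> v)) \<le> K * (\<bar>\<sigma>\<bar> + \<bar>v\<bar> + N) ^ N"
proof -
  define n where "n = nat \<lfloor>1 - \<sigma>\<rfloor>"
  have Nn: "N = Suc n" unfolding N_def n_def ..
  have Nbig: "\<sigma> - 1 + real N > 0" unfolding N_def by linarith
  define L where "L = ln q"
  define r where "r = exp ((\<sigma> - 1) * ln q) * q ^ N"
  have r: "r < 1" "0 \<le> r" unfolding r_def using geo_lt1[OF q Nbig] by auto
  define E where "E = exp (\<bar>\<sigma> + N\<bar> * (- ln (1-q)))"
  define c1 where "c1 = (\<Sum>k<N. exp ((\<sigma> - 1 + k) * ln q) / \<epsilon>)"
  define c2 where "c2 = E / fact n * (r / (1 - r))"
  define K where "K = exp (\<sigma> * ln (1-q)) * (c1 + c2)"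
  have c1: "c1 \<ge> 0" unfolding c1_def using e by (intro sum_nonneg) auto
  have c2: "c2 \<ge> 0" unfolding c2_def E_def using r by auto
  have K: "K \<ge> 0" unfolding K_def using c1 c2 by auto
  show ?thesis
  proof (intro exI[of _ K] conjI allI impI K)
    fix v assume inf: "(INF r\<in>{-1::int..}. cmod (1 - qpow q (of_int r + Complex \<sigma> v))) > \<epsilon>"
    define s where "s = Complex \<sigma> v"
    define t where "t = s - 1"
    define X where "X = \<bar>\<sigma>\<bar> + \<bar>v\<bar> + real N"
    have X0: "X \<ge> 0" unfolding X_def by simp
    have Res: "Re s = \<sigma>" "Re t = \<sigma> - 1" unfolding s_def t_def by auto
    have cs: "cmod s \<le> \<bar>\<sigma>\<bar> + \<bar>v\<bar>" unfolding s_def using cmod_le[of "Complex \<sigma> v"] by simp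
    have poch: "cmod (pochhammer s k) \<le> X ^ N" if "k \<le> N" for k
      unfolding X_def using poch_le_X[OF that cs] by simp
    have tP: "t \<notin> zq_poles q" unfolding t_def s_def
      by (rule not_pole_of_INF[OF q]) (use inf e in simp)
    have tO: "t \<in> {u. Re u > - real (Suc n)} - zq_poles q" using tP Nbig Res Nn by auto
    have z: "zeta_q q s = GG q s N t"
      unfolding zeta_q_def t_def[symmetric] zeta_q2_eq[OF q tP] FF_eq[OF q tO] Nn ..
    have w: "cmod (1 - qpow q (t + of_nat k)) > \<epsilon>" for k
    proof -
      have "t + of_nat k = of_int (int k - 1) + s" unfolding t_def by simp
      hence "cmod (1 - qpow q (t + of_nat k)) \<ge> (INF r\<in>{-1::int..}. cmod (1 - qpow q (of_int r + s)))"
        using INF_le[of "int k - 1" q s] by (simp only:)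
      thus ?thesis using inf unfolding s_def by simp
    qed
    have fin: "cmod (\<Sum>k<N. pochhammer s k / fact k * (qpow q (t + of_nat k) / (1 - qpow q (t + of_nat k))))
               \<le> X ^ N * c1"
    proof -
      have "cmod (\<Sum>k<N. pochhammer s k / fact k * (qpow q (t + of_nat k) / (1 - qpow q (t + of_nat k))))
           \<le> (\<Sum>k<N. cmod (pochhammer s k / fact k * (qpow q (t + of_nat k) / (1 - qpow q (t + of_nat k)))))"
        by (rule norm_sum)
      also have "\<dots> \<le> (\<Sum>k<N. X ^ N * (exp ((\<sigma> - 1 + k) * ln q) / \<epsilon>))"
      proof (rule sum_mono)
        fix k assume k: "k \<in> {..<N}"
        have f1: "cmod (pochhammer s k / fact k) \<le> X ^ N"
        proof -
          have "cmod (pochhammer s k / fact k) = cmod (pochhammer s k) / fact k"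
            by (simp add: norm_divide)
          also have "\<dots> \<le> cmod (pochhammer s k)"
            using divide_left_mono[of 1 "fact k" "cmod (pochhammer s k)"] by (simp add: fact_ge_1)
          finally show ?thesis using poch[of k] k by simp
        qed
        have f2: "cmod (qpow q (t + of_nat k) / (1 - qpow q (t + of_nat k))) \<le> exp ((\<sigma> - 1 + k) * ln q) / \<epsilon>"
          unfolding norm_divide norm_qpow using w[of k] e Res
          by (intro frac_le) auto
        show "cmod (pochhammer s k / fact k * (qpow q (t + of_nat k) / (1 - qpow q (t + of_nat k))))
              \<le> X ^ N * (exp ((\<sigma> - 1 + k) * ln q) / \<epsilon>)"
          unfolding norm_mult using X0 by (intro mult_mono f1 f2) auto
      qed
      also have "\<dots> = X ^ N * c1" unfolding c1_def by (simp add: sum_distrib_left)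
      finally show ?thesis .
    qed
    have ser: "cmod (\<Sum>m. gterm q s N m t) \<le> X ^ N * c2"
    proof -
      have a: "(\<sigma> - 1) + real (Suc n) > 0" using Nbig Nn by simp
      have "cmod (\<Sum>m. gterm q s N m t) \<le> (\<Sum>m. (cmod (pochhammer s (Suc n)) * exp (\<bar>Re s + Suc n\<bar> * (- ln (1-q))) / fact n) * (exp ((\<sigma> - 1) * ln q) * q ^ Suc n) ^ Suc m)"
        unfolding Nn by (rule norm_suminf_le[OF gterm_bound[OF q] gterm_summable_bound[OF q a]]) (simp add: Res)
      also have "\<dots> = (cmod (pochhammer s N) * E / fact n) * (r / (1 - r))"
      proof -
        have "(\<lambda>m. r ^ Suc m) sums (r * (1 / (1 - r)))"
          using sums_mult[OF geometric_sums[of r], of r] r by (simp add: power_Suc)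
        hence "(\<lambda>m. (cmod (pochhammer s N) * E / fact n) * r ^ Suc m) sums ((cmod (pochhammer s N) * E / fact n) * (r / (1 - r)))"
          by (intro sums_mult) simp
        thus ?thesis unfolding r_def E_def Nn Res by (simp add: sums_iff)
      qed
      also have "\<dots> \<le> X ^ N * E / fact n * (r / (1 - r))"
        using poch[of N] r unfolding E_def by (intro mult_right_mono divide_right_mono) auto
      finally show ?thesis unfolding c2_def by simp
    qed
    have "cmod (zeta_q q s) \<le> exp (\<sigma> * ln (1-q)) * (X ^ N * c1 + X ^ N * c2)"
      unfolding z GG_def norm_mult
    proof (rule mult_mono)
      show "cmod (exp (s * complex_of_real (ln (1 - q)))) \<le> exp (\<sigma> * ln (1 - q))"
        by (simp add: norm_exp_eq_Re Res)
      show "cmod ((\<Sum>k<N. pochhammer s k / fact k * (qpow q (t + of_nat k) / (1 - qpow q (t + of_nat k)))) + (\<Sum>m. gterm q s N m t)) \<le> X ^ N * c1 + X ^ N * c2"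
        by (rule order_trans[OF norm_triangle_ineq add_mono[OF fin ser]])
    qed auto
    also have "\<dots> = K * X ^ N" unfolding K_def by (simp add: algebra_simps)
    finally show "cmod (zeta_q q (Complex \<sigma> v)) \<le> K * (\<bar>\<sigma>\<bar> + \<bar>v\<bar> + N) ^ N"
      unfolding s_def X_def .
  qed
qed



lemma pow_fact_le_exp:
  fixes x :: real assumes "x \<ge> 0"
  shows "x ^ n / fact n \<le> exp x"
proof -
  have s: "(\<lambda>n. x^n / fact n) sums exp x" using exp_converges[of x] by (simp add: divide_inverse mult.commute)
  have "sum (\<lambda>n. x^n / fact n) {n} \<le> suminf (\<lambda>n. x^n / fact n)"
    by (rule sum_le_suminf) (use s assms in \<open>auto simp: sums_iff\<close>)
  thus ?thesis using s by (simp add: sums_iff)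
qed

lemma series_bound:
  assumes q: "0 < q" "q < 1" and sg: "\<sigma> > 1"
  shows "cmod (zeta_q q (Complex \<sigma> v)) \<le> exp ((\<sigma> - 1) * ln q) / (1 - exp ((\<sigma> - 1) * ln q))"
proof -
  define s where "s = Complex \<sigma> v"
  define t where "t = s - 1"
  define r where "r = exp ((\<sigma> - 1) * ln q)"
  have r: "r < 1" "0 \<le> r" unfolding r_def using q sg by (auto simp: mult_pos_neg)
  have Ret: "Re t > 0" "Re t = \<sigma> - 1" "Re s = \<sigma>" unfolding t_def s_def using sg by auto
  have z: "zeta_q q s = zeta_q2_series q s t"
    unfolding zeta_q_def t_def[symmetric] zeta_q2_eq[OF q Re_pos_not_pole[OF q Ret(1)]] FF_series[OF q Ret(1)] ..
  have b: "cmod (qpow q (of_nat (Suc m) * t) / exp (s * of_real (ln (qint q (Suc m))))) \<le> r ^ Suc m" for m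
  proof -
    have "q ^ Suc m \<le> q" using q by (intro power_Suc_le_self) auto
    hence "1 - q \<le> 1 - q ^ Suc m" by simp
    hence "qint q (Suc m) \<ge> 1" using q unfolding qint_def by (subst le_divide_eq_1_pos) auto
    hence "ln (qint q (Suc m)) \<ge> 0" by simp
    hence e1: "exp (\<sigma> * ln (qint q (Suc m))) \<ge> 1" using sg by simp
    have "cmod (qpow q (of_nat (Suc m) * t)) = r ^ Suc m"
      unfolding r_def by (subst exp_of_nat_mult[symmetric]) (simp add: norm_qpow Ret mult_ac)
    moreover have "cmod (exp (s * of_real (ln (qint q (Suc m))))) = exp (\<sigma> * ln (qint q (Suc m)))"
      by (simp add: norm_exp_eq_Re Ret)
    moreover have "r ^ Suc m / exp (\<sigma> * ln (qint q (Suc m))) \<le> r ^ Suc m"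
      using divide_left_mono[of 1 "exp (\<sigma> * ln (qint q (Suc m)))" "r ^ Suc m"] e1 r by simp
    ultimately show ?thesis unfolding norm_divide by (simp add: Ret)
  qed
  have sm: "(\<lambda>m. r ^ Suc m) sums (r * (1 / (1 - r)))"
    using sums_mult[OF geometric_sums[of r], of r] r by (simp add: power_Suc)
  have "cmod (zeta_q q s) \<le> (\<Sum>m. r ^ Suc m)"
    unfolding z zeta_q2_series_def by (rule norm_suminf_le[OF b]) (use sm in \<open>simp add: sums_iff\<close>)
  also have "\<dots> = r / (1 - r)" using sm by (simp add: sums_iff)
  finally show ?thesis unfolding s_def r_def .
qed



theorem corollary1p2:
  fixes \<epsilon> q \<sigma> :: real
  assumes "\<epsilon> > 0" and "0 < q" and "q < 1"
  shows "\<exists>C V0. C > 0 \<and> V0 > 0 \<and>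
    (\<forall>v::real. \<bar>v\<bar> \<ge> V0 \<longrightarrow>
       (INF r\<in>{-1::int..}. cmod (1 - qpow q (of_int r + Complex \<sigma> v))) > \<epsilon> \<longrightarrow>
       cmod (zeta_q q (Complex \<sigma> v)) \<le>
         (if \<sigma> > 1 then C
          else if \<sigma> = 1 then C * \<bar>v\<bar>
          else C * exp (- (\<sigma> - 1) * (1 + pi / 2) * \<bar>v\<bar>)))"
proof -
  have q: "0 < q" "q < 1" using assms by auto
  consider (gt) "\<sigma> > 1" | (eq) "\<sigma> = 1" | (lt) "\<sigma> < 1" by linarith
  thus ?thesis
  proof cases
    case gt
    define B where "B = exp ((\<sigma> - 1) * ln q) / (1 - exp ((\<sigma> - 1) * ln q))"
    have "(\<sigma> - 1) * ln q < 0" using q gt by (intro mult_pos_neg) auto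
    hence "B \<ge> 0" unfolding B_def by (auto intro!: divide_nonneg_nonneg)
    show ?thesis
    proof (intro exI[of _ "B + 1"] exI[of _ 1] conjI allI impI)
      fix v :: real
      have "cmod (zeta_q q (Complex \<sigma> v)) \<le> B + 1" using series_bound[OF q gt, of v] unfolding B_def by linarith
      thus "cmod (zeta_q q (Complex \<sigma> v)) \<le> (if \<sigma> > 1 then B + 1 else if \<sigma> = 1 then (B + 1) * \<bar>v\<bar>
          else (B + 1) * exp (- (\<sigma> - 1) * (1 + pi / 2) * \<bar>v\<bar>))" using gt by simp
    qed (use \<open>B \<ge> 0\<close> in auto)
  next
    case eq
    obtain K where K: "K \<ge> 0" "\<And>v. (INF r\<in>{-1::int..}. cmod (1 - qpow q (of_int r + Complex \<sigma> v))) > \<epsilon> \<Longrightarrow>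
           cmod (zeta_q q (Complex \<sigma> v)) \<le> K * (\<bar>\<sigma>\<bar> + \<bar>v\<bar> + Suc (nat \<lfloor>1 - \<sigma>\<rfloor>)) ^ Suc (nat \<lfloor>1 - \<sigma>\<rfloor>)"
      using poly_bound[OF assms(1) q, of \<sigma>] by blast
    have main: "cmod (zeta_q q (Complex \<sigma> v)) \<le> (3 * K + 1) * \<bar>v\<bar>"
      if v: "1 \<le> \<bar>v\<bar>" and inf: "(INF r\<in>{-1::int..}. cmod (1 - qpow q (of_int r + Complex \<sigma> v))) > \<epsilon>" for v
    proof -
      have "cmod (zeta_q q (Complex \<sigma> v)) \<le> K * (2 + \<bar>v\<bar>)" using K(2)[OF inf] eq by simp
      also have "\<dots> \<le> K * (3 * \<bar>v\<bar>)" using K(1) v by (intro mult_left_mono) auto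
      also have "\<dots> \<le> (3 * K + 1) * \<bar>v\<bar>" using v by (simp add: algebra_simps)
      finally show ?thesis .
    qed
    show ?thesis
      by (rule exI[of _ "3 * K + 1"], rule exI[of _ 1]) (use K(1) eq main in auto)
  next
    case lt
    define N where "N = Suc (nat \<lfloor>1 - \<sigma>\<rfloor>)"
    obtain K where K: "K \<ge> 0" "\<And>v. (INF r\<in>{-1::int..}. cmod (1 - qpow q (of_int r + Complex \<sigma> v))) > \<epsilon> \<Longrightarrow>
           cmod (zeta_q q (Complex \<sigma> v)) \<le> K * (\<bar>\<sigma>\<bar> + \<bar>v\<bar> + N) ^ N"
      using poly_bound[OF assms(1) q, of \<sigma>] unfolding N_def by blast
    define \<delta> where "\<delta> = (1 - \<sigma>) * (1 + pi / 2)"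
    have d: "\<delta> > 0" unfolding \<delta>_def using lt pi_gt_zero by (intro mult_pos_pos) (auto simp: add_pos_pos)
    define a where "a = \<bar>\<sigma>\<bar> + N"
    define C where "C = K * (fact N / \<delta> ^ N * exp (\<delta> * a)) + 1"
    have C0: "K * (fact N / \<delta> ^ N * exp (\<delta> * a)) \<ge> 0" using K(1) d by simp
    have main: "cmod (zeta_q q (Complex \<sigma> v)) \<le> C * exp (- (\<sigma> - 1) * (1 + pi / 2) * \<bar>v\<bar>)"
      if inf: "(INF r\<in>{-1::int..}. cmod (1 - qpow q (of_int r + Complex \<sigma> v))) > \<epsilon>" for v
    proof -
      have x0: "0 \<le> \<delta> * (a + \<bar>v\<bar>)" using d unfolding a_def by simp
      have "(\<delta> * (a + \<bar>v\<bar>)) ^ N / fact N \<le> exp (\<delta> * (a + \<bar>v\<bar>))" by (rule pow_fact_le_exp[OF x0])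
      hence "\<delta> ^ N * (a + \<bar>v\<bar>) ^ N \<le> fact N * exp (\<delta> * (a + \<bar>v\<bar>))"
        by (simp add: divide_le_eq power_mult_distrib mult.commute)
      moreover have "exp (\<delta> * (a + \<bar>v\<bar>)) = exp (\<delta> * a) * exp (\<delta> * \<bar>v\<bar>)"
        by (simp add: distrib_left exp_add)
      ultimately have "\<delta> ^ N * (a + \<bar>v\<bar>) ^ N \<le> fact N * (exp (\<delta> * a) * exp (\<delta> * \<bar>v\<bar>))" by simp
      hence p: "(a + \<bar>v\<bar>) ^ N \<le> fact N / \<delta> ^ N * exp (\<delta> * a) * exp (\<delta> * \<bar>v\<bar>)"
        using d by (simp add: pos_le_divide_eq mult.commute mult.left_commute)
      have "cmod (zeta_q q (Complex \<sigma> v)) \<le> K * (a + \<bar>v\<bar>) ^ N" using K(2)[OF inf] unfolding a_def by (simp add: add_ac)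
      also have "\<dots> \<le> K * (fact N / \<delta> ^ N * exp (\<delta> * a) * exp (\<delta> * \<bar>v\<bar>))"
        using K(1) p by (rule mult_left_mono[rotated])
      also have "\<dots> \<le> C * exp (\<delta> * \<bar>v\<bar>)" unfolding C_def by (simp add: algebra_simps)
      also have "\<delta> * \<bar>v\<bar> = - (\<sigma> - 1) * (1 + pi / 2) * \<bar>v\<bar>" unfolding \<delta>_def by simp
      finally show ?thesis .
    qed
    have "C > 0" using C0 unfolding C_def by simp
    thus ?thesis
      by (intro exI[of _ C] exI[of _ 1]) (use lt main in auto)
  qed
qed

end
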